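(* Fix integers $s,t\geq 2$ and a subset $W=\{w_1<w_2<\cdots<w_k\}$ of $\{s+1,\ldots,st\}$. Let $\Omega_{s,t}(W)$ be the collection of all sets of integers $I=\{i_1<i_2<\cdots<i_k\}$ satisfying $w_\ell-s+\ell\leq i_\ell\leq w_\ell-1$ for all $\ell\in[k]$, and let $\Lambda_{s,t}(W)$ be the set of all $321$-avoiding linear extensions of $K_{s,t}^\alpha$ whose right-to-left minima are precisely the elements of $[st]\setminus W$. For $I\in\Omega_{s,t}(W)$ let $\mu_W(I)=\mu_1\cdots\mu_{st}$ be the permutation of $[st]$ with $\mu_{i_\ell}=w_\ell$ for all $\ell\in[k]$ and with the elements of $[st]\setminus W$ placed in increasing order in the remaining positions. Then $I\mapsto\mu_W(I)$ is a well-defined injection $\Omega_{s,t}(W)\to\Lambda_{s,t}(W)$. If $t=2$, this map is a bijection.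
   Context: $K^\alpha_{s,t}$ is the poset on $[st]$ whose order is generated by the covering relations $i\lessdot i+1$ for $1\le i\le s-1$ and $i\lessdot i+s$ for $1\le i\le st-s$ (the comb $K_{s,t}$ with $\alpha$-labeling $e_{i,j}\mapsto (j-1)s+i$). A linear extension is a permutation of $[st]$ in which $x$ precedes $y$ whenever $x<y$ in the poset. An entry $\pi_i$ is a right-to-left minimum if $\pi_i<\pi_j$ for all $j>i$. *)

theory Defs
  imports Main
begin

text \<open>Permutations of [n] are represented as lists of naturals (positions are
0-indexed in the list; paper position p corresponds to list index p-1).\<close>

definition is_perm :: "nat \<Rightarrow> nat list \<Rightarrow> bool" where
  "is_perm n \<pi> \<longleftrightarrow> distinct \<pi> \<and> set \<pi> = {1..n}"

definition comb_cover :: "nat \<Rightarrow> nat \<Rightarrow> nat \<Rightarrow> nat \<Rightarrow> bool" where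
  "comb_cover s t x y \<longleftrightarrow>
     (1 \<le> x \<and> x \<le> s - 1 \<and> y = x + 1) \<or> (1 \<le> x \<and> x + s \<le> s * t \<and> y = x + s)"

definition comb_less :: "nat \<Rightarrow> nat \<Rightarrow> nat \<Rightarrow> nat \<Rightarrow> bool" where
  "comb_less s t = (comb_cover s t)\<^sup>+\<^sup>+"

definition precedes :: "nat list \<Rightarrow> nat \<Rightarrow> nat \<Rightarrow> bool" where
  "precedes \<pi> x y \<longleftrightarrow> (\<exists>i j. i < j \<and> j < length \<pi> \<and> \<pi> ! i = x \<and> \<pi> ! j = y)"

definition linear_extension :: "nat \<Rightarrow> nat \<Rightarrow> nat list \<Rightarrow> bool" where
  "linear_extension s t \<pi> \<longleftrightarrow> is_perm (s * t) \<pi> \<and>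
     (\<forall>x y. comb_less s t x y \<longrightarrow> precedes \<pi> x y)"

definition avoids_321 :: "nat list \<Rightarrow> bool" where
  "avoids_321 \<pi> \<longleftrightarrow>
     \<not> (\<exists>i j k. i < j \<and> j < k \<and> k < length \<pi> \<and> \<pi> ! i > \<pi> ! j \<and> \<pi> ! j > \<pi> ! k)"

definition rl_minima :: "nat list \<Rightarrow> nat set" where
  "rl_minima \<pi> = {\<pi> ! i | i. i < length \<pi> \<and> (\<forall>j. i < j \<and> j < length \<pi> \<longrightarrow> \<pi> ! i < \<pi> ! j)}"

text \<open>Omega_{s,t}(W); index l is 0-based here, so paper's l is l+1.
 The condition w_l - s + l \<le> i_l \<le> w_l - 1 is written without truncating subtraction.\<close>
definition Omega :: "nat \<Rightarrow> nat \<Rightarrow> nat set \<Rightarrow> nat set set" where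
  "Omega s t W = {I. finite I \<and> card I = card W \<and>
     (\<forall>l < card W. sorted_list_of_set W ! l + (l + 1) \<le> sorted_list_of_set I ! l + s
                  \<and> sorted_list_of_set I ! l + 1 \<le> sorted_list_of_set W ! l)}"

definition Lambda :: "nat \<Rightarrow> nat \<Rightarrow> nat set \<Rightarrow> nat list set" where
  "Lambda s t W = {\<pi>. linear_extension s t \<pi> \<and> avoids_321 \<pi> \<and>
                       rl_minima \<pi> = {1..s*t} - W}"

definition mu_entry :: "nat \<Rightarrow> nat \<Rightarrow> nat set \<Rightarrow> nat set \<Rightarrow> nat \<Rightarrow> nat" where
  "mu_entry s t W I p =
     (if p \<in> I then sorted_list_of_set W ! card {q \<in> I. q < p}
      else sorted_list_of_set ({1..s*t} - W) ! card {q \<in> {1..s*t} - I. q < p})"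

definition mu :: "nat \<Rightarrow> nat \<Rightarrow> nat set \<Rightarrow> nat set \<Rightarrow> nat list" where
  "mu s t W I = map (mu_entry s t W I) [1..<s*t+1]"

end

theory Submission
  imports Defs
begin

definition rk :: "nat set \<Rightarrow> nat \<Rightarrow> nat" where "rk A x = card {q\<in>A. q<x}"

lemma rk_mono: "finite A \<Longrightarrow> a \<le> b \<Longrightarrow> rk A a \<le> rk A b"
  unfolding rk_def by (rule card_mono) auto

lemma rk_strict: "finite A \<Longrightarrow> a \<in> A \<Longrightarrow> a < b \<Longrightarrow> rk A a < rk A b"
  unfolding rk_def by (rule psubset_card_mono) auto

lemma rk_less_card: "finite A \<Longrightarrow> a \<in> A \<Longrightarrow> rk A a < card A"
  unfolding rk_def by (rule psubset_card_mono) auto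

lemma rk_le_card: "finite A \<Longrightarrow> rk A a \<le> card A"
  unfolding rk_def by (rule card_mono) auto

lemma rk_cmp: "finite A \<Longrightarrow> q \<in> A \<Longrightarrow> p \<notin> A \<Longrightarrow> (p < q \<longleftrightarrow> rk A p \<le> rk A q)"
proof -
  assume A: "finite A" "q \<in> A" "p \<notin> A"
  show ?thesis
  proof
    assume "p < q" then show "rk A p \<le> rk A q" using rk_mono A(1) by simp
  next
    assume h: "rk A p \<le> rk A q"
    show "p < q"
    proof (rule ccontr)
      assume "\<not> p < q"
      moreover have "p \<noteq> q" using A by auto
      ultimately have "q < p" by simp
      then have "rk A q < rk A p" using rk_strict A by blast
      then show False using h by simp
    qed
  qed
qed

lemma sl_strict: "finite A \<Longrightarrow> i < j \<Longrightarrow> j < card A \<Longrightarrow>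
   sorted_list_of_set A ! i < sorted_list_of_set A ! j"
  by (metis sorted_list_of_set.length_sorted_key_list_of_set sorted_list_of_set.strict_sorted_key_list_of_set sorted_wrt_nth_less)

lemma sl_in: "finite A \<Longrightarrow> i < card A \<Longrightarrow> sorted_list_of_set A ! i \<in> A"
  by (metis nth_mem sorted_list_of_set.length_sorted_key_list_of_set sorted_list_of_set.set_sorted_key_list_of_set)

lemma rk_sl: assumes "finite A" "i < card A" shows "rk A (sorted_list_of_set A ! i) = i"
proof -
  let ?L = "sorted_list_of_set A"
  have len: "length ?L = card A" by simp
  have "{q\<in>A. q < ?L ! i} = (\<lambda>j. ?L ! j) ` {..<i}"
  proof safe
    fix q assume q: "q \<in> A" "q < ?L ! i"
    then obtain j where j: "j < card A" "q = ?L ! j"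
      by (metis assms(1) in_set_conv_nth len sorted_list_of_set.set_sorted_key_list_of_set)
    have "j < i"
    proof (rule ccontr)
      assume "\<not> j < i"
      then have "i = j \<or> i < j" by auto
      then have "?L ! i \<le> ?L ! j" using sl_strict[OF assms(1), of i j] j(1) by auto
      then show False using j(2) q(2) by simp
    qed
    then show "q \<in> (\<lambda>j. ?L ! j) ` {..<i}" using j by auto
  next
    fix j assume ji: "j < i"
    have "j < card A" using ji assms(2) by simp
    then show "?L ! j \<in> A" by (rule sl_in[OF assms(1)])
    show "?L ! j < ?L ! i" by (rule sl_strict[OF assms(1) ji assms(2)])
  qed
  moreover have "inj_on (\<lambda>j. ?L ! j) {..<i}"
  proof (rule inj_onI)
    fix a b assume ab: "a \<in> {..<i}" "b \<in> {..<i}" "?L ! a = ?L ! b"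
    then have "a < card A" "b < card A" using assms(2) by auto
    then show "a = b" using ab(3) sl_strict[OF assms(1), of a b] sl_strict[OF assms(1), of b a]
      by (cases a b rule: linorder_cases) auto
  qed
  ultimately show ?thesis unfolding rk_def by (simp add: card_image)
qed

lemma sl_rk: assumes "finite A" "a \<in> A" shows "sorted_list_of_set A ! rk A a = a"
proof -
  obtain i where i: "i < card A" "a = sorted_list_of_set A ! i"
    by (metis assms in_set_conv_nth sorted_list_of_set.length_sorted_key_list_of_set sorted_list_of_set.set_sorted_key_list_of_set)
  then show ?thesis using rk_sl[OF assms(1) i(1)] by simp
qed

lemma rk_transfer: assumes "finite A" "strict_mono_on A h" "h ` A = B" "a \<in> A"
  shows "rk B (h a) = rk A a"
proof -
  have sm: "\<And>x y. x \<in> A \<Longrightarrow> y \<in> A \<Longrightarrow> x < y \<Longrightarrow> h x < h y"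
    using assms(2) unfolding strict_mono_on_def by blast
  have iff: "\<And>x. x \<in> A \<Longrightarrow> h x < h a \<longleftrightarrow> x < a"
  proof -
    fix x assume x: "x \<in> A"
    show "h x < h a \<longleftrightarrow> x < a"
    proof
      assume "x < a" then show "h x < h a" using sm x assms(4) by blast
    next
      assume hx: "h x < h a"
      show "x < a"
      proof (rule ccontr)
        assume "\<not> x < a"
        then have "x = a \<or> a < x" by auto
        then show False using hx sm[OF assms(4) x] by auto
      qed
    qed
  qed
  have "{b\<in>B. b < h a} = h ` {q\<in>A. q<a}"
  proof safe
    fix b assume "b \<in> B" "b < h a"
    then obtain x where "x \<in> A" "b = h x" using assms(3) by blast
    then show "b \<in> h ` {q\<in>A. q<a}" using iff \<open>b < h a\<close> by blast
  next
    fix x assume "x \<in> A" "x < a"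
    then show "h x \<in> B" "h x < h a" using assms(3) iff by auto
  qed
  moreover have "inj_on h {q\<in>A. q<a}"
  proof (rule inj_onI)
    fix x y assume xy: "x \<in> {q\<in>A. q<a}" "y \<in> {q\<in>A. q<a}" "h x = h y"
    then show "x = y" using sm[of x y] sm[of y x] by (cases x y rule: linorder_cases) auto
  qed
  ultimately show ?thesis unfolding rk_def by (simp add: card_image)
qed

lemma rk_compl: assumes "A \<subseteq> {1..n}" "1 \<le> x" "x \<le> n"
  shows "rk ({1..n} - A) x + rk A x + 1 = x"
proof -
  have a: "{q\<in>{1..n} - A. q<x} = {1..<x} - A" using assms by auto
  have b: "{q\<in>A. q<x} = {1..<x} \<inter> A" using assms by auto
  have "card ({1..<x} - A) + card ({1..<x} \<inter> A) = card {1..<x}"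
  proof -
    have disj: "({1..<x} - A) \<inter> ({1..<x} \<inter> A) = {}" by blast
    have "card (({1..<x} - A) \<union> ({1..<x} \<inter> A)) = card ({1..<x} - A) + card ({1..<x} \<inter> A)"
      by (rule card_Un_disjoint) (auto simp: disj)
    then show ?thesis by (simp add: Un_Diff_Int)
  qed
  then show ?thesis unfolding rk_def a b using assms by simp
qed

lemma len_map1[simp]: "length (map g [1..<n+1]) = n" by simp

lemma nth_map1[simp]: "i < n \<Longrightarrow> map g [1..<n+1] ! i = g (1+i)"
  by (simp del: upt_Suc)

lemma set_map1: "set (map g [1..<n+1]) = g ` {1..n}"
  by (simp del: upt_Suc add: atLeastLessThanSuc_atLeastAtMost)

lemma precedes_map: "precedes (map g [1..<n+1]) x y \<longleftrightarrow>
   (\<exists>p q. 1 \<le> p \<and> p < q \<and> q \<le> n \<and> g p = x \<and> g q = y)"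
proof
  assume "precedes (map g [1..<n+1]) x y"
  then obtain i j where "i < j" "j < n" "g (1+i) = x" "g (1+j) = y"
    unfolding precedes_def by (auto simp del: upt_Suc)
  then show "\<exists>p q. 1 \<le> p \<and> p < q \<and> q \<le> n \<and> g p = x \<and> g q = y"
    by (intro exI[of _ "1+i"] exI[of _ "1+j"]) auto
next
  assume "\<exists>p q. 1 \<le> p \<and> p < q \<and> q \<le> n \<and> g p = x \<and> g q = y"
  then obtain p q where "1 \<le> p" "p < q" "q \<le> n" "g p = x" "g q = y" by auto
  then show "precedes (map g [1..<n+1]) x y" unfolding precedes_def
    by (intro exI[of _ "p-1"] exI[of _ "q-1"]) (auto simp del: upt_Suc)
qed

lemma avoids_map: "avoids_321 (map g [1..<n+1]) \<longleftrightarrow>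
   \<not> (\<exists>p q r. 1 \<le> p \<and> p < q \<and> q < r \<and> r \<le> n \<and> g p > g q \<and> g q > g r)"
proof
  assume a: "avoids_321 (map g [1..<n+1])"
  show "\<not> (\<exists>p q r. 1 \<le> p \<and> p < q \<and> q < r \<and> r \<le> n \<and> g p > g q \<and> g q > g r)"
  proof
    assume "\<exists>p q r. 1 \<le> p \<and> p < q \<and> q < r \<and> r \<le> n \<and> g p > g q \<and> g q > g r"
    then obtain p q r where h: "1 \<le> p" "p < q" "q < r" "r \<le> n" "g p > g q" "g q > g r" by auto
    then show False using a unfolding avoids_321_def
      apply (elim notE)
      apply (rule exI[of _ "p-1"], rule exI[of _ "q-1"], rule exI[of _ "r-1"])
      by (auto simp del: upt_Suc)
  qed
next
  assume a: "\<not> (\<exists>p q r. 1 \<le> p \<and> p < q \<and> q < r \<and> r \<le> n \<and> g p > g q \<and> g q > g r)"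
  show "avoids_321 (map g [1..<n+1])" unfolding avoids_321_def
  proof
    assume "\<exists>i j k. i < j \<and> j < k \<and> k < length (map g [1..<n+1]) \<and>
        map g [1..<n+1] ! i > map g [1..<n+1] ! j \<and> map g [1..<n+1] ! j > map g [1..<n+1] ! k"
    then obtain i j k where "i < j" "j < k" "k < n" "g (1+i) > g (1+j)" "g (1+j) > g (1+k)"
      by (auto simp del: upt_Suc)
    then show False using a
      apply (elim notE)
      apply (rule exI[of _ "1+i"], rule exI[of _ "1+j"], rule exI[of _ "1+k"])
      by auto
  qed
qed

lemma rl_map: "rl_minima (map g [1..<n+1]) =
   {g p | p. 1 \<le> p \<and> p \<le> n \<and> (\<forall>q. p < q \<and> q \<le> n \<longrightarrow> g p < g q)}"
proof safe
  fix x assume "x \<in> rl_minima (map g [1..<n+1])"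
  then obtain i where i: "i < n" "x = g (1+i)"
    "\<forall>j. i < j \<and> j < n \<longrightarrow> g (1+i) < g (1+j)"
    unfolding rl_minima_def by (auto simp del: upt_Suc)
  have "\<forall>q. 1+i < q \<and> q \<le> n \<longrightarrow> g (1+i) < g q"
  proof safe
    fix q assume "1+i < q" "q \<le> n"
    then have "i < q - 1" "q - 1 < n" by auto
    then show "g (1+i) < g q" using i(3)[rule_format, of "q-1"] \<open>1+i < q\<close> by simp
  qed
  then show "\<exists>p. x = g p \<and> 1 \<le> p \<and> p \<le> n \<and> (\<forall>q. p < q \<and> q \<le> n \<longrightarrow> g p < g q)"
    using i by (intro exI[of _ "1+i"]) auto
next
  fix p assume p: "1 \<le> p" "p \<le> n" "\<forall>q. p < q \<and> q \<le> n \<longrightarrow> g p < g q"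
  show "g p \<in> rl_minima (map g [1..<n+1])" unfolding rl_minima_def
  proof (rule CollectI, rule exI[of _ "p-1"], safe)
    show "g p = map g [1..<n+1] ! (p-1)" using p by (auto simp del: upt_Suc)
    show "p - 1 < length (map g [1..<n+1])" using p by (auto simp del: upt_Suc)
    fix j assume "p - 1 < j" "j < length (map g [1..<n+1])"
    then show "map g [1..<n+1] ! (p - 1) < map g [1..<n+1] ! j"
      using p(3)[rule_format, of "1+j"] p by (auto simp del: upt_Suc)
  qed
qed

lemma perm_map: "inj_on g {1..n} \<Longrightarrow> g ` {1..n} = {1..n} \<Longrightarrow> is_perm n (map g [1..<n+1])"
  unfolding is_perm_def set_map1 by (simp del: upt_Suc add: distinct_map atLeastLessThanSuc_atLeastAtMost)

lemma linext_map:
  assumes t1: "1 \<le> t" and inj: "inj_on g {1..s*t}" and im: "g ` {1..s*t} = {1..s*t}"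
    and cov: "\<And>p q. p \<in> {1..s*t} \<Longrightarrow> q \<in> {1..s*t} \<Longrightarrow> comb_cover s t (g p) (g q) \<Longrightarrow> p < q"
  shows "linear_extension s t (map g [1..<s*t+1])"
  unfolding linear_extension_def
proof safe
  show "is_perm (s*t) (map g [1..<s*t+1])" by (rule perm_map[OF inj im])
  let ?P = "\<lambda>x y. \<exists>p q. 1 \<le> p \<and> p < q \<and> q \<le> s*t \<and> g p = x \<and> g q = y"
  have st: "s \<le> s*t" using t1 by simp
  fix x y assume "comb_less s t x y"
  then have "(comb_cover s t)\<^sup>+\<^sup>+ x y" unfolding comb_less_def .
  then have "?P x y"
  proof (rule tranclp_trans_induct)
    fix x y assume base: "comb_cover s t x y"
    then have "1 \<le> x \<and> x \<le> s*t \<and> 1 \<le> y \<and> y \<le> s*t" unfolding comb_cover_def using st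
      by (elim disjE conjE; intro conjI; linarith)
    then have "x \<in> {1..s*t}" "y \<in> {1..s*t}" by auto
    then obtain p q where "p \<in> {1..s*t}" "q \<in> {1..s*t}" "g p = x" "g q = y"
      using im by (metis imageE)
    then show "?P x y" using cov base by auto
  next
    fix x y z assume "(comb_cover s t)\<^sup>+\<^sup>+ x y" "?P x y" "(comb_cover s t)\<^sup>+\<^sup>+ y z" "?P y z"
    then obtain p q q' r where h: "1 \<le> p" "p < q" "q \<le> s*t" "g p = x" "g q = y"
      "1 \<le> q'" "q' < r" "r \<le> s*t" "g q' = y" "g r = z" by blast
    have "q \<in> {1..s*t}" "q' \<in> {1..s*t}" using h by auto
    then have "q = q'" using inj_onD[OF inj] h(5,9) by metis
    then show "?P x z" using h by (intro exI[of _ p] exI[of _ r]) simp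
  qed
  then show "precedes (map g [1..<s*t+1]) x y" unfolding precedes_map .
qed


section \<open>Forward direction\<close>

context
  fixes s t :: nat and W I :: "nat set"
  assumes s2: "s \<ge> 2" and t2: "t \<ge> 2" and Wsub: "W \<subseteq> {s+1..s*t}" and IO: "I \<in> Omega s t W"
begin

lemma finW: "finite W" using Wsub finite_subset by blast
lemma finI: "finite I" using IO unfolding Omega_def by auto
lemma cardI: "card I = card W" using IO unfolding Omega_def by auto
lemma W1: "W \<subseteq> {1..s*t}" using Wsub by auto

lemma omega_rk:
  assumes p: "p \<in> I"
  shows "rk I p < card W" "sorted_list_of_set W ! rk I p \<in> W"
        "rk W (sorted_list_of_set W ! rk I p) = rk I p"
        "p < sorted_list_of_set W ! rk I p"
        "sorted_list_of_set W ! rk I p + rk I p + 1 \<le> p + s"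
proof -
  have l: "rk I p < card W" using rk_less_card[OF finI p] cardI by simp
  then show "rk I p < card W" .
  show "sorted_list_of_set W ! rk I p \<in> W" using sl_in[OF finW l] .
  show "rk W (sorted_list_of_set W ! rk I p) = rk I p" using rk_sl[OF finW l] .
  have c: "sorted_list_of_set W ! rk I p + (rk I p + 1) \<le> sorted_list_of_set I ! rk I p + s
      \<and> sorted_list_of_set I ! rk I p + 1 \<le> sorted_list_of_set W ! rk I p"
    using IO l unfolding Omega_def by auto
  have "sorted_list_of_set I ! rk I p = p" using sl_rk[OF finI p] .
  then show "p < sorted_list_of_set W ! rk I p"
        "sorted_list_of_set W ! rk I p + rk I p + 1 \<le> p + s" using c by auto
qed

lemma I1: "I \<subseteq> {1..s*t}"
proof
  fix p assume p: "p \<in> I"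
  have "sorted_list_of_set W ! rk I p \<in> {s+1..s*t}" using omega_rk(2)[OF p] Wsub by auto
  then show "p \<in> {1..s*t}" using omega_rk(4,5)[OF p] by auto
qed

lemma cardJC: "card ({1..s*t} - I) = card ({1..s*t} - W)"
  using I1 W1 cardI finI finW by (simp add: card_Diff_subset)

abbreviation "f \<equiv> mu_entry s t W I"

lemma fI: "p \<in> I \<Longrightarrow> f p = sorted_list_of_set W ! rk I p"
  unfolding mu_entry_def rk_def by simp

lemma fJ: assumes p: "p \<in> {1..s*t} - I"
  shows "f p = sorted_list_of_set ({1..s*t} - W) ! rk ({1..s*t} - I) p"
    "f p \<in> {1..s*t} - W" "rk ({1..s*t} - W) (f p) = rk ({1..s*t} - I) p"
proof -
  show e: "f p = sorted_list_of_set ({1..s*t} - W) ! rk ({1..s*t} - I) p"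
    using p unfolding mu_entry_def rk_def by simp
  have l: "rk ({1..s*t} - I) p < card ({1..s*t} - W)"
    using rk_less_card[of "{1..s*t} - I" p] p cardJC by simp
  show "f p \<in> {1..s*t} - W" unfolding e by (rule sl_in[OF _ l]) simp
  show "rk ({1..s*t} - W) (f p) = rk ({1..s*t} - I) p" unfolding e by (rule rk_sl[OF _ l]) simp
qed

lemma fI_W: "p \<in> I \<Longrightarrow> f p \<in> W" using fI omega_rk(2) by simp
lemma fI_rk: "p \<in> I \<Longrightarrow> rk W (f p) = rk I p" using fI omega_rk(3) by simp

lemma monoI: assumes p: "p \<in> I" and q: "q \<in> I" and pq: "p < q" shows "f p < f q"
proof -
  have "rk I p < rk I q" by (rule rk_strict[OF finI p pq])
  moreover have "rk I q < card W" by (rule omega_rk(1)[OF q])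
  ultimately have "sorted_list_of_set W ! rk I p < sorted_list_of_set W ! rk I q" by (rule sl_strict[OF finW])
  then show ?thesis using fI p q by simp
qed

lemma monoJ: "p \<in> {1..s*t} - I \<Longrightarrow> q \<in> {1..s*t} - I \<Longrightarrow> p < q \<Longrightarrow> f p < f q"
proof -
  assume a: "p \<in> {1..s*t} - I" "q \<in> {1..s*t} - I" "p < q"
  have "rk ({1..s*t} - I) p < rk ({1..s*t} - I) q" using rk_strict a by simp
  moreover have "rk ({1..s*t} - I) q < card ({1..s*t} - W)"
    using rk_less_card[of "{1..s*t} - I" q] a cardJC by simp
  ultimately have "sorted_list_of_set ({1..s*t} - W) ! rk ({1..s*t} - I) p
     < sorted_list_of_set ({1..s*t} - W) ! rk ({1..s*t} - I) q" by (intro sl_strict) auto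
  then show "f p < f q" using fJ(1)[OF a(1)] fJ(1)[OF a(2)] by simp
qed

lemma imI: "f ` I = W"
proof
  show "f ` I \<subseteq> W" using fI_W by auto
  show "W \<subseteq> f ` I"
  proof
    fix w assume w: "w \<in> W"
    have l: "rk W w < card I" using rk_less_card[OF finW w] cardI by simp
    let ?p = "sorted_list_of_set I ! rk W w"
    have "?p \<in> I" using sl_in[OF finI l] .
    moreover have "rk I ?p = rk W w" using rk_sl[OF finI l] .
    ultimately have "f ?p = w" using fI sl_rk[OF finW w] by simp
    then show "w \<in> f ` I" using \<open>?p \<in> I\<close> by force
  qed
qed

lemma imJ: "f ` ({1..s*t} - I) = {1..s*t} - W"
proof
  show "f ` ({1..s*t} - I) \<subseteq> {1..s*t} - W" using fJ(2) by auto
  show "{1..s*t} - W \<subseteq> f ` ({1..s*t} - I)"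
  proof
    fix w assume w: "w \<in> {1..s*t} - W"
    have l: "rk ({1..s*t} - W) w < card ({1..s*t} - I)" using rk_less_card[of _ w] w cardJC by simp
    let ?p = "sorted_list_of_set ({1..s*t} - I) ! rk ({1..s*t} - W) w"
    have pin: "?p \<in> {1..s*t} - I" using sl_in[OF _ l] by simp
    moreover have "rk ({1..s*t} - I) ?p = rk ({1..s*t} - W) w" using rk_sl[OF _ l] by simp
    ultimately have "f ?p = w" using fJ(1) sl_rk[of _ w] w by simp
    then show "w \<in> f ` ({1..s*t} - I)" using pin by force
  qed
qed

lemma im_all: "f ` {1..s*t} = {1..s*t}"
proof -
  have "{1..s*t} = I \<union> ({1..s*t} - I)" using I1 by auto
  then have "f ` {1..s*t} = W \<union> ({1..s*t} - W)" using imI imJ by (metis image_Un)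
  then show ?thesis using W1 by auto
qed

lemma inj_all: "inj_on f {1..s*t}"
proof (rule eq_card_imp_inj_on)
  show "finite {1..s*t}" by simp
  show "card (f ` {1..s*t}) = card {1..s*t}" by (subst im_all) (rule refl)
qed

lemma rl_iff: assumes p: "p \<in> {1..s*t}"
  shows "(\<forall>q. p < q \<and> q \<le> s*t \<longrightarrow> f p < f q) \<longleftrightarrow> p \<notin> I"
proof
  assume pI: "p \<notin> I"
  show "\<forall>q. p < q \<and> q \<le> s*t \<longrightarrow> f p < f q"
  proof safe
    fix q assume q: "p < q" "q \<le> s*t"
    show "f p < f q"
    proof (cases "q \<in> I")
      case False
      then show ?thesis using monoJ p pI q by auto
    next
      case True
      let ?J = "{1..s*t} - I" and ?C = "{1..s*t} - W"
      have pJ: "p \<in> ?J" using p pI by auto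
      have qJ: "q \<notin> ?J" using True by auto
      have "\<not> q < p" using q by simp
      then have a: "rk ?J p < rk ?J q" using rk_cmp[of ?J p q] pJ qJ by simp
      have b: "rk ?J q + rk I q + 1 = q" using rk_compl[OF I1, of q] True I1 by auto
      have c: "q < f q" using omega_rk(4)[OF True] fI[OF True] by simp
      have d: "rk ?C (f p) = rk ?J p" using fJ(3)[OF pJ] .
      have wW: "f q \<in> W" using fI_W[OF True] .
      have e: "rk ?C (f q) + rk W (f q) + 1 = f q" using rk_compl[OF W1, of "f q"] wW W1 by auto
      have g: "rk W (f q) = rk I q" using fI_rk[OF True] .
      have "rk ?C (f p) < rk ?C (f q)" using a b c d e g by linarith
      moreover have "f p \<in> ?C" using fJ(2)[OF pJ] .
      moreover have "f q \<notin> ?C" using wW by simp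
      ultimately have "\<not> f q < f p" "f p \<noteq> f q" using rk_cmp[of ?C "f p" "f q"] by auto
      then show ?thesis by simp
    qed
  qed
next
  assume rl: "\<forall>q. p < q \<and> q \<le> s*t \<longrightarrow> f p < f q"
  show "p \<notin> I"
  proof
    assume pI: "p \<in> I"
    let ?J = "{1..s*t} - I" and ?C = "{1..s*t} - W"
    let ?j = "rk ?J p"
    have b: "?j + rk I p + 1 = p" using rk_compl[OF I1, of p] pI I1 by auto
    have c: "p < f p" using omega_rk(4)[OF pI] fI[OF pI] by simp
    have wW: "f p \<in> W" using fI_W[OF pI] .
    have e: "rk ?C (f p) + rk W (f p) + 1 = f p" using rk_compl[OF W1, of "f p"] wW W1 by auto
    have g: "rk W (f p) = rk I p" using fI_rk[OF pI] .
    have h: "rk ?C (f p) \<le> card ?J" using rk_le_card[of ?C] cardJC by simp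
    have l: "?j < card ?J" using b c e g h by linarith
    let ?q = "sorted_list_of_set ?J ! ?j"
    have qJ: "?q \<in> ?J" using sl_in[OF _ l] by simp
    have rq: "rk ?J ?q = ?j" using rk_sl[OF _ l] by simp
    have "p < ?q" using rk_cmp[of ?J ?q p] qJ pI rq by simp
    moreover have "?q \<le> s*t" using qJ by simp
    ultimately have lt: "f p < f ?q" using rl by blast
    have "rk ?C (f ?q) = ?j" using fJ(3)[OF qJ] rq by simp
    then have "rk ?C (f ?q) < rk ?C (f p)" using b c e g by linarith
    moreover have "f ?q \<in> ?C" using fJ(2)[OF qJ] .
    moreover have "f p \<notin> ?C" using wW by simp
    ultimately have "\<not> f p < f ?q" using rk_cmp[of ?C "f ?q" "f p"] by auto
    then show False using lt by simp
  qed
qed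

lemma rl_fwd: "rl_minima (mu s t W I) = {1..s*t} - W"
proof -
  have "rl_minima (mu s t W I) = {f p | p. 1 \<le> p \<and> p \<le> s*t \<and> (\<forall>q. p < q \<and> q \<le> s*t \<longrightarrow> f p < f q)}"
    unfolding mu_def by (rule rl_map)
  also have "\<dots> = {f p | p. p \<in> {1..s*t} - I}"
  proof -
    have eq: "\<And>p. (1 \<le> p \<and> p \<le> s*t \<and> (\<forall>q. p < q \<and> q \<le> s*t \<longrightarrow> f p < f q)) = (p \<in> {1..s*t} - I)"
      using rl_iff by force
    show ?thesis by (simp only: eq)
  qed
  also have "\<dots> = f ` ({1..s*t} - I)" by blast
  finally show ?thesis using imJ by simp
qed

lemma mono_same: "a \<in> {1..s*t} \<Longrightarrow> b \<in> {1..s*t} \<Longrightarrow> a < b \<Longrightarrow> (a \<in> I \<longleftrightarrow> b \<in> I) \<Longrightarrow> f a < f b"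
  using monoI monoJ by blast

lemma avoid_fwd: "avoids_321 (mu s t W I)"
  unfolding mu_def avoids_map
proof
  assume "\<exists>p q r. 1 \<le> p \<and> p < q \<and> q < r \<and> r \<le> s*t \<and> f p > f q \<and> f q > f r"
  then obtain p q r where h: "1 \<le> p" "p < q" "q < r" "r \<le> s*t" "f p > f q" "f q > f r" by blast
  have m: "p \<in> {1..s*t}" "q \<in> {1..s*t}" "r \<in> {1..s*t}" using h by auto
  show False
  proof (cases "p \<in> I \<longleftrightarrow> q \<in> I")
    case True
    then show ?thesis using mono_same[OF m(1,2) h(2)] h(5) by simp
  next
    case F1: False
    show ?thesis
    proof (cases "q \<in> I \<longleftrightarrow> r \<in> I")
      case True
      then show ?thesis using mono_same[OF m(2,3) h(3)] h(6) by simp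
    next
      case False
      then have "p \<in> I \<longleftrightarrow> r \<in> I" using F1 by blast
      then show ?thesis using mono_same[OF m(1,3)] h by simp
    qed
  qed
qed

lemma cover_fwd: assumes p: "p \<in> {1..s*t}" and q: "q \<in> {1..s*t}" and cv: "comb_cover s t (f p) (f q)"
  shows "p < q"
proof -
  let ?J = "{1..s*t} - I" and ?C = "{1..s*t} - W"
  have lt: "f p < f q" using cv s2 unfolding comb_cover_def by auto
  show ?thesis
  proof (cases "p \<in> I"; cases "q \<in> I")
    assume "p \<in> I" "q \<in> I"
    then show ?thesis using lt monoI by (metis linorder_neqE_nat order_less_asym)
  next
    assume a: "p \<notin> I" "q \<notin> I"
    then show ?thesis using lt monoJ p q by (metis DiffI linorder_neqE_nat order_less_asym)
  next
    assume pI: "p \<in> I" and qI: "q \<notin> I"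
    have qJ: "q \<in> ?J" using q qI by auto
    have wW: "f p \<in> W" using fI_W[OF pI] .
    then have ws: "f p \<ge> s+1" using Wsub by auto
    then have fq: "f q = f p + s" using cv unfolding comb_cover_def by auto
    have b: "rk ?J p + rk I p + 1 = p" using rk_compl[OF I1, of p] pI I1 by auto
    have c: "p < f p" using omega_rk(4)[OF pI] fI[OF pI] by simp
    have g: "rk W (f p) = rk I p" using fI_rk[OF pI] .
    have d: "rk ?J q = rk ?C (f q)" using fJ(3)[OF qJ] by simp
    have fqC: "f q \<in> {1..s*t}" using fJ(2)[OF qJ] by simp
    have e: "rk ?C (f q) + rk W (f q) + 1 = f q" using rk_compl[OF W1, of "f q"] fqC by auto
    have "{x\<in>W. x < f q} \<subseteq> {x\<in>W. x < f p} \<union> {f p..<f p + s}" using fq by auto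
    then have "rk W (f q) \<le> card ({x\<in>W. x < f p} \<union> {f p..<f p + s})"
      unfolding rk_def by (intro card_mono) auto
    also have "\<dots> \<le> rk W (f p) + s" unfolding rk_def using card_Un_le[of "{x\<in>W. x < f p}" "{f p..<f p + s}"] by simp
    finally have k: "rk W (f q) \<le> rk W (f p) + s" .
    have "rk ?J p \<le> rk ?J q" using b c d e g k fq by linarith
    then show ?thesis using rk_cmp[of ?J q p] qJ pI by simp
  next
    assume pI: "p \<notin> I" and qI: "q \<in> I"
    have pJ: "p \<in> ?J" using p pI by auto
    have wW: "f q \<in> W" using fI_W[OF qI] .
    then have ws: "f q \<ge> s+1" using Wsub by auto
    have fpC: "f p \<in> {1..s*t}" using fJ(2)[OF pJ] by simp
    have fq: "f q = f p + s" using cv ws unfolding comb_cover_def by auto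
    have b: "rk ?J q + rk I q + 1 = q" using rk_compl[OF I1, of q] qI I1 by auto
    have c: "f q + rk I q + 1 \<le> q + s" using omega_rk(5)[OF qI] fI[OF qI] by simp
    have d: "rk ?J p = rk ?C (f p)" using fJ(3)[OF pJ] by simp
    have e: "rk ?C (f p) + rk W (f p) + 1 = f p" using rk_compl[OF W1, of "f p"] fpC by auto
    have "rk ?J p < rk ?J q" using b c d e fq by linarith
    then have "\<not> q < p" using rk_cmp[of ?J p q] pJ qI by simp
    moreover have "p \<noteq> q" using pI qI by auto
    ultimately show ?thesis by simp
  qed
qed

lemma fwd: "mu s t W I \<in> Lambda s t W"
  unfolding Lambda_def
proof (intro CollectI conjI)
  show "linear_extension s t (mu s t W I)" unfolding mu_def
  proof (rule linext_map)
    show "1 \<le> t" using t2 by simp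
    show "inj_on f {1..s*t}" by (rule inj_all)
    show "f ` {1..s*t} = {1..s*t}" by (rule im_all)
    fix p q assume "p \<in> {1..s*t}" "q \<in> {1..s*t}" "comb_cover s t (f p) (f q)"
    then show "p < q" by (rule cover_fwd)
  qed
  show "avoids_321 (mu s t W I)" by (rule avoid_fwd)
  show "rl_minima (mu s t W I) = {1..s*t} - W" by (rule rl_fwd)
qed

lemma I_recover: "I = {p \<in> {1..s*t}. f p \<in> W}"
  using I1 fI_W fJ(2) by auto

end


section \<open>Surjectivity for t = 2\<close>

context
  fixes s :: nat and W :: "nat set" and \<pi> :: "nat list"
  assumes s2: "s \<ge> 2" and Wsub: "W \<subseteq> {s+1..s*2}" and PL: "\<pi> \<in> Lambda s 2 W"
begin

abbreviation "g \<equiv> \<lambda>p. \<pi> ! (p - 1)"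
abbreviation "II \<equiv> {p \<in> {1..s*2}. g p \<in> W}"

lemma finW2: "finite W" using Wsub finite_subset by blast
lemma W12: "W \<subseteq> {1..s*2}" using Wsub by auto

lemma perm\<pi>: "distinct \<pi>" "set \<pi> = {1..s*2}"
  using PL unfolding Lambda_def linear_extension_def is_perm_def by auto

lemma len\<pi>: "length \<pi> = s*2"
  using distinct_card[OF perm\<pi>(1)] perm\<pi>(2) by simp

lemma \<pi>map: "\<pi> = map g [1..<s*2+1]"
  by (rule nth_equalityI) (simp_all add: len\<pi> del: upt_Suc)

lemma g_im: "g ` {1..s*2} = {1..s*2}"
proof -
  have "set (map g [1..<s*2+1]) = g ` {1..s*2}" by (rule set_map1)
  then have "set \<pi> = g ` {1..s*2}" unfolding \<pi>map[symmetric] .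
  then show ?thesis using perm\<pi>(2) by simp
qed

lemma g_inj: "inj_on g {1..s*2}"
proof -
  have "distinct (map g [1..<s*2+1])" unfolding \<pi>map[symmetric] by (rule perm\<pi>(1))
  then have "inj_on g (set [1..<s*2+1])" by (simp only: distinct_map)
  moreover have "set [1..<s*2+1] = {1..s*2}" by (simp del: upt_Suc add: atLeastLessThanSuc_atLeastAtMost)
  ultimately show ?thesis by simp
qed

lemma g_in: "p \<in> {1..s*2} \<Longrightarrow> g p \<in> {1..s*2}" using g_im by blast

lemma g_eq: "p \<in> {1..s*2} \<Longrightarrow> q \<in> {1..s*2} \<Longrightarrow> g p = g q \<Longrightarrow> p = q"
  using g_inj unfolding inj_on_def by blast

lemma rl\<pi>: "{g p | p. 1 \<le> p \<and> p \<le> s*2 \<and> (\<forall>q. p < q \<and> q \<le> s*2 \<longrightarrow> g p < g q)} = {1..s*2} - W"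
proof -
  have "rl_minima \<pi> = {1..s*2} - W" using PL unfolding Lambda_def by auto
  moreover have "rl_minima (map g [1..<s*2+1]) = {g p | p. 1 \<le> p \<and> p \<le> s*2 \<and> (\<forall>q. p < q \<and> q \<le> s*2 \<longrightarrow> g p < g q)}"
    by (rule rl_map)
  ultimately show ?thesis unfolding \<pi>map[symmetric] by simp
qed

lemma av\<pi>: "\<not> (\<exists>p q r. 1 \<le> p \<and> p < q \<and> q < r \<and> r \<le> s*2 \<and> g p > g q \<and> g q > g r)"
proof -
  have "avoids_321 \<pi>" using PL unfolding Lambda_def by auto
  then have "avoids_321 (map g [1..<s*2+1])" unfolding \<pi>map[symmetric] .
  then show ?thesis unfolding avoids_map .
qed

lemma G1: assumes p: "p \<in> {1..s*2}"
  shows "(\<forall>q. p < q \<and> q \<le> s*2 \<longrightarrow> g p < g q) \<longleftrightarrow> p \<notin> II"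
proof
  assume rl: "\<forall>q. p < q \<and> q \<le> s*2 \<longrightarrow> g p < g q"
  have "g p \<in> {g p | p. 1 \<le> p \<and> p \<le> s*2 \<and> (\<forall>q. p < q \<and> q \<le> s*2 \<longrightarrow> g p < g q)}"
    using p rl by auto
  then have "g p \<in> {1..s*2} - W" unfolding rl\<pi> .
  then show "p \<notin> II" by simp
next
  assume "p \<notin> II"
  then have "g p \<in> {1..s*2} - W" using g_in[OF p] p by simp
  then have "g p \<in> {g p | p. 1 \<le> p \<and> p \<le> s*2 \<and> (\<forall>q. p < q \<and> q \<le> s*2 \<longrightarrow> g p < g q)}"
    unfolding rl\<pi> .
  then obtain p' where p': "g p = g p'" "1 \<le> p'" "p' \<le> s*2" "\<forall>q. p' < q \<and> q \<le> s*2 \<longrightarrow> g p' < g q"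
    by blast
  then have "p = p'" using g_eq[of p p'] p by simp
  then show "\<forall>q. p < q \<and> q \<le> s*2 \<longrightarrow> g p < g q" using p' by simp
qed

lemma imII: "g ` II = W"
proof
  show "g ` II \<subseteq> W" by auto
  show "W \<subseteq> g ` II"
  proof
    fix w assume w: "w \<in> W"
    then have "w \<in> g ` {1..s*2}" using g_im W12 by auto
    then obtain p where "p \<in> {1..s*2}" "w = g p" by blast
    then show "w \<in> g ` II" using w by blast
  qed
qed

lemma imJJ: "g ` ({1..s*2} - II) = {1..s*2} - W"
proof
  show "g ` ({1..s*2} - II) \<subseteq> {1..s*2} - W" using g_in by auto
  show "{1..s*2} - W \<subseteq> g ` ({1..s*2} - II)"
  proof
    fix w assume w: "w \<in> {1..s*2} - W"
    then have "w \<in> g ` {1..s*2}" using g_im by auto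
    then obtain p where "p \<in> {1..s*2}" "w = g p" by blast
    then show "w \<in> g ` ({1..s*2} - II)" using w by blast
  qed
qed

lemma smJ: "strict_mono_on ({1..s*2} - II) g"
proof (rule strict_mono_onI)
  fix p q assume "p \<in> {1..s*2} - II" "q \<in> {1..s*2} - II" "p < q"
  then show "g p < g q" using G1[of p] by auto
qed

lemma smI: "strict_mono_on II g"
proof (rule strict_mono_onI)
  fix p q assume p: "p \<in> II" and q: "q \<in> II" and pq: "p < q"
  show "g p < g q"
  proof (rule ccontr)
    assume "\<not> g p < g q"
    moreover have "g p \<noteq> g q" using g_eq[of p q] p q pq by auto
    ultimately have qp: "g q < g p" by simp
    have "\<not> (\<forall>r. q < r \<and> r \<le> s*2 \<longrightarrow> g q < g r)" using G1[of q] q by auto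
    then obtain r where r: "q < r" "r \<le> s*2" "\<not> g q < g r" by blast
    have "g r \<noteq> g q" using g_eq[of r q] r q by auto
    then have "g r < g q" using r by simp
    then show False using av\<pi> p pq r qp by auto
  qed
qed

lemma finII: "finite II" by simp
lemma II1: "II \<subseteq> {1..s*2}" by auto

lemma cardII: "card II = card W"
proof -
  have "inj_on g II" using g_inj by (rule inj_on_subset) auto
  then have "card (g ` II) = card II" by (rule card_image)
  then show ?thesis using imII by simp
qed

lemma rkI: "p \<in> II \<Longrightarrow> rk W (g p) = rk II p"
  by (rule rk_transfer[OF finII smI imII])

lemma rkJ: "p \<in> {1..s*2} - II \<Longrightarrow> rk ({1..s*2} - W) (g p) = rk ({1..s*2} - II) p"
  by (rule rk_transfer[OF _ smJ imJJ]) simp_all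

lemma gI: "p \<in> II \<Longrightarrow> g p = sorted_list_of_set W ! rk II p"
proof -
  assume p: "p \<in> II"
  then have "g p \<in> W" by simp
  then have "sorted_list_of_set W ! rk W (g p) = g p" by (rule sl_rk[OF finW2])
  then show ?thesis using rkI[OF p] by simp
qed

lemma gJ: "p \<in> {1..s*2} - II \<Longrightarrow> g p = sorted_list_of_set ({1..s*2} - W) ! rk ({1..s*2} - II) p"
proof -
  assume p: "p \<in> {1..s*2} - II"
  have "g p \<in> {1..s*2} - W" using imJJ p by blast
  then have "sorted_list_of_set ({1..s*2} - W) ! rk ({1..s*2} - W) (g p) = g p"
    by (intro sl_rk) auto
  then show ?thesis using rkJ[OF p] by simp
qed

lemma mu_eq: "mu s 2 W II = \<pi>"
proof -
  have "map (mu_entry s 2 W II) [1..<s*2+1] = map g [1..<s*2+1]"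
  proof (rule map_cong[OF refl])
    fix p assume "p \<in> set [1..<s*2+1]"
    then have p: "p \<in> {1..s*2}" by (simp del: upt_Suc add: atLeastLessThanSuc_atLeastAtMost)
    show "mu_entry s 2 W II p = g p"
    proof (cases "p \<in> II")
      case True
      then show ?thesis unfolding mu_entry_def using gI[OF True] unfolding rk_def by simp
    next
      case False
      then have pJ: "p \<in> {1..s*2} - II" using p by simp
      have "mu_entry s 2 W II p = sorted_list_of_set ({1..s*2} - W) ! rk ({1..s*2} - II) p"
        unfolding mu_entry_def rk_def by (rule if_not_P[OF False])
      then show ?thesis using gJ[OF pJ] by simp
    qed
  qed
  note eq = this
  show ?thesis unfolding mu_def by (rule trans[OF eq \<pi>map[symmetric]])
qed

lemma bounds: assumes p: "p \<in> II"
  shows "p < g p" "g p + rk II p + 1 \<le> p + s"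
proof -
  let ?J = "{1..s*2} - II" and ?C = "{1..s*2} - W"
  have pn: "p \<in> {1..s*2}" using p by simp
  have wW: "g p \<in> W" using p by simp
  have b: "rk ?J p + rk II p + 1 = p" using rk_compl[OF II1, of p] pn by auto
  have e: "rk ?C (g p) + rk W (g p) + 1 = g p" using rk_compl[OF W12, of "g p"] wW W12 by auto
  have gg: "rk W (g p) = rk II p" using rkI[OF p] .
  show "p < g p"
  proof (rule ccontr)
    assume "\<not> p < g p"
    have "\<not> (\<forall>r. p < r \<and> r \<le> s*2 \<longrightarrow> g p < g r)" using G1[OF pn] p by auto
    then obtain r where r: "p < r" "r \<le> s*2" "\<not> g p < g r" by blast
    have rn: "r \<in> {1..s*2}" using r pn by auto
    have "g r \<noteq> g p" using g_eq[OF rn pn] r by auto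
    then have lt: "g r < g p" using r by simp
    have rJ: "r \<in> ?J"
    proof
      show "r \<in> {1..s*2}" by (rule rn)
      show "r \<notin> II"
      proof
        assume "r \<in> II"
        then have "g p < g r" using smI p r(1) unfolding strict_mono_on_def by blast
        then show False using lt by simp
      qed
    qed
    have c1: "rk ?C (g r) = rk ?J r" using rkJ[OF rJ] .
    have c2: "rk ?J p \<le> rk ?J r" using rk_cmp[of ?J r p] rJ p r(1) by simp
    have grC: "g r \<in> ?C" using imJJ rJ by blast
    have c3: "rk ?C (g r) < rk ?C (g p)" by (rule rk_strict[OF _ grC lt]) simp
    show False using b e gg c1 c2 c3 \<open>\<not> p < g p\<close> by linarith
  qed
  have ws: "s + 1 \<le> g p" "g p \<le> s*2" using wW Wsub by auto
  define x where "x = g p - s"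
  have cv: "comb_cover s 2 x (g p)" unfolding comb_cover_def x_def using ws by auto
  then have "comb_less s 2 x (g p)" unfolding comb_less_def by (rule tranclp.r_into_trancl)
  then have "precedes \<pi> x (g p)" using PL unfolding Lambda_def linear_extension_def by blast
  then obtain a b where ab: "1 \<le> a" "a < b" "b \<le> s*2" "g a = x" "g b = g p"
  proof -
    have "precedes (map g [1..<s*2+1]) x (g p)" unfolding \<pi>map[symmetric] by fact
    then show ?thesis using that unfolding precedes_map by blast
  qed
  have "b = p" using g_eq[of b p] ab pn by auto
  have an: "a \<in> {1..s*2}" using ab by auto
  have xs: "x \<le> s" using ws x_def by simp
  have aJ: "a \<in> ?J" using an ab xs Wsub by auto
  have "\<not> p < a" using ab \<open>b = p\<close> by simp
  then have c1: "rk ?J a < rk ?J p" using rk_cmp[of ?J a p] aJ p by simp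
  have c2: "rk ?C x = rk ?J a" using rkJ[OF aJ] ab by simp
  have xn: "1 \<le> x" "x \<le> s*2" using ws x_def by auto
  have c3: "rk ?C x + rk W x + 1 = x" using rk_compl[OF W12, of x] xn by auto
  have "{q \<in> W. q < x} = {}" using Wsub xs by auto
  then have c4: "rk W x = 0" unfolding rk_def by simp
  show "g p + rk II p + 1 \<le> p + s" using b c1 c2 c3 c4 x_def ws by linarith
qed

lemma II_Omega: "II \<in> Omega s 2 W"
  unfolding Omega_def
proof (intro CollectI conjI allI impI)
  show "finite II" by simp
  show "card II = card W" by (rule cardII)
  fix l assume l: "l < card W"
  then have l': "l < card II" using cardII by simp
  let ?p = "sorted_list_of_set II ! l"
  have pI: "?p \<in> II" by (rule sl_in[OF finII l'])
  have rp: "rk II ?p = l" by (rule rk_sl[OF finII l'])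
  have gp: "sorted_list_of_set W ! l = g ?p" using gI[OF pI] rp by simp
  show "sorted_list_of_set W ! l + (l + 1) \<le> ?p + s" using bounds(2)[OF pI] gp rp by simp
  show "?p + 1 \<le> sorted_list_of_set W ! l" using bounds(1)[OF pI] gp by simp
qed

end

lemma inj_mu:
  assumes "s \<ge> 2" "t \<ge> 2" "W \<subseteq> {s+1..s*t}"
  shows "inj_on (mu s t W) (Omega s t W)"
proof (rule inj_onI)
  fix I1 I2 assume I1: "I1 \<in> Omega s t W" and I2: "I2 \<in> Omega s t W" and eq: "mu s t W I1 = mu s t W I2"
  have "\<And>p. p \<in> {1..s*t} \<Longrightarrow> mu_entry s t W I1 p = mu_entry s t W I2 p"
  proof -
    fix p assume p: "p \<in> {1..s*t}"
    have e: "mu s t W I1 ! (p - 1) = mu s t W I2 ! (p - 1)" using eq by simp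
    have pl: "p - 1 < s*t" using p by auto
    have a1: "mu s t W I1 ! (p-1) = mu_entry s t W I1 (1 + (p-1))" unfolding mu_def by (rule nth_map1[OF pl])
    have a2: "mu s t W I2 ! (p-1) = mu_entry s t W I2 (1 + (p-1))" unfolding mu_def by (rule nth_map1[OF pl])
    have "1 + (p - 1) = p" using p by auto
    then show "mu_entry s t W I1 p = mu_entry s t W I2 p" using e a1 a2 by simp
  qed
  then have "{p \<in> {1..s*t}. mu_entry s t W I1 p \<in> W} = {p \<in> {1..s*t}. mu_entry s t W I2 p \<in> W}"
    by auto
  moreover note r1 = I_recover[OF assms I1]
  moreover note r2 = I_recover[OF assms I2]
  ultimately show "I1 = I2" by argo
qed

theorem theorem3:
  fixes s t :: nat and W :: "nat set"
  assumes "s \<ge> 2" and "t \<ge> 2" and "W \<subseteq> {s+1..s*t}"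
  shows "(\<forall>I \<in> Omega s t W. mu s t W I \<in> Lambda s t W)
         \<and> inj_on (mu s t W) (Omega s t W)
         \<and> (t = 2 \<longrightarrow> bij_betw (mu s t W) (Omega s t W) (Lambda s t W))"
proof (intro conjI impI ballI)
  fix I assume "I \<in> Omega s t W"
  then show "mu s t W I \<in> Lambda s t W" using fwd assms by blast
next
  show "inj_on (mu s t W) (Omega s t W)" by (rule inj_mu[OF assms])
next
  assume t: "t = 2"
  show "bij_betw (mu s t W) (Omega s t W) (Lambda s t W)"
    unfolding bij_betw_def
  proof (intro conjI)
    show "inj_on (mu s t W) (Omega s t W)" by (rule inj_mu[OF assms])
    show "mu s t W ` Omega s t W = Lambda s t W"
    proof
      show "mu s t W ` Omega s t W \<subseteq> Lambda s t W" using fwd assms by blast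
      show "Lambda s t W \<subseteq> mu s t W ` Omega s t W"
      proof
        fix \<pi> assume "\<pi> \<in> Lambda s t W"
        then have "\<pi> \<in> Lambda s 2 W" using t by simp
        moreover have W2: "W \<subseteq> {s+1..s*2}" using assms(3) t by simp
        ultimately have "II s W \<pi> \<in> Omega s 2 W" "mu s 2 W (II s W \<pi>) = \<pi>"
          using II_Omega[OF assms(1) W2] mu_eq[OF assms(1) W2] by auto
        then show "\<pi> \<in> mu s t W ` Omega s t W" using t by force
      qed
    qed
  qed
qed

end
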